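(* There are infinitely many golden ellipses in the unit disc $\mathbb{D}$ which are Blaschke $3$-ellipses.
   Context: The golden ratio is $\alpha=\frac{1+\sqrt5}{2}$. A golden ellipse is an ellipse for which the ratio of the length of the major axis to the length of the minor axis equals $\alpha$. For a Blaschke product of degree three of the form $B(z)=z\frac{(z-a_1)(z-a_2)}{(1-\overline{a_1}z)(1-\overline{a_2}z)}$ with $|a_1|,|a_2|<1$ and distinct zeros $0,a_1,a_2$, the associated Blaschke $3$-ellipse is the ellipse $E=\{z: |z-a_1|+|z-a_2|=|1-\overline{a_1}a_2|\}$ (with foci $a_1,a_2$); a Blaschke ellipse means an ellipse arising this way from some such $B$. *)

theory Defs
  imports "HOL-Analysis.Analysis"
begin

definition golden_ratio :: real where
  "golden_ratio = (1 + sqrt 5) / 2"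

definition ellipse_set :: "complex \<Rightarrow> complex \<Rightarrow> real \<Rightarrow> complex set" where
  "ellipse_set f1 f2 s = {z. cmod (z - f1) + cmod (z - f2) = s}"

text \<open>A (non-degenerate) ellipse with foci f1, f2 and major axis length s > |f1 - f2|
  has minor axis length sqrt (s^2 - |f1 - f2|^2). It is golden if major/minor = golden ratio.\<close>
definition golden_ellipse :: "complex set \<Rightarrow> bool" where
  "golden_ellipse E \<longleftrightarrow>
     (\<exists>f1 f2 s. s > cmod (f1 - f2) \<and> E = ellipse_set f1 f2 s \<and>
        s / sqrt (s\<^sup>2 - (cmod (f1 - f2))\<^sup>2) = golden_ratio)"

text \<open>Blaschke 3-ellipse of B(z) = z (z-a1)(z-a2)/((1 - conj a1 z)(1 - conj a2 z)),
  with |a1|,|a2| < 1 and distinct zeros 0, a1, a2.\<close>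
definition blaschke_3_ellipse :: "complex \<Rightarrow> complex \<Rightarrow> complex set" where
  "blaschke_3_ellipse a1 a2 = ellipse_set a1 a2 (cmod (1 - cnj a1 * a2))"

definition is_blaschke_ellipse :: "complex set \<Rightarrow> bool" where
  "is_blaschke_ellipse E \<longleftrightarrow>
     (\<exists>a1 a2. cmod a1 < 1 \<and> cmod a2 < 1 \<and> a1 \<noteq> 0 \<and> a2 \<noteq> 0 \<and> a1 \<noteq> a2 \<and>
        E = blaschke_3_ellipse a1 a2)"

end

theory Submission
  imports Defs
begin

definition tt :: real where "tt = sqrt (sqrt 5 - 2)"
definition nn :: "real \<Rightarrow> real" where "nn x = sqrt (1 + x\<^sup>2)"
definition bb :: "real \<Rightarrow> complex" where "bb x = Complex (tt / nn x) (tt * x / nn x)"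
definition EE :: "real \<Rightarrow> complex set" where
  "EE x = ellipse_set (bb x) (- bb x) (1 + tt\<^sup>2)"

lemma s5: "sqrt 5 > (2::real)" "sqrt 5 < (3::real)"
proof -
  show "sqrt 5 > (2::real)" by (rule real_less_rsqrt) simp
  show "sqrt 5 < (3::real)" by (rule real_less_lsqrt) simp_all
qed

lemma tt2: "tt\<^sup>2 = sqrt 5 - 2" using s5 by (simp add: tt_def)
lemma tt_pos: "tt > 0" using s5 by (simp add: tt_def)
lemma tt_lt1: "tt < 1" unfolding tt_def using s5 by simp

lemma nn_pos: "nn x > 0" unfolding nn_def by (simp add: add_pos_nonneg)
lemma nn_sq: "(nn x)\<^sup>2 = 1 + x\<^sup>2" unfolding nn_def by (simp add: add_nonneg_nonneg)

lemma cmod_scaled: "cmod (Complex (c / nn x) (c * x / nn x)) = \<bar>c\<bar>"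
proof -
  have "cmod (Complex (c / nn x) (c * x / nn x)) = sqrt ((c / nn x)\<^sup>2 + (c * x / nn x)\<^sup>2)"
    by (simp add: cmod_def)
  also have "(c / nn x)\<^sup>2 + (c * x / nn x)\<^sup>2 = c\<^sup>2"
  proof -
    have 1: "(c / nn x)\<^sup>2 + (c * x / nn x)\<^sup>2 = c\<^sup>2 * (1 + x\<^sup>2) / (nn x)\<^sup>2"
      by (simp add: power_divide power_mult_distrib add_divide_distrib algebra_simps)
    have "(nn x)\<^sup>2 \<noteq> 0" using nn_pos[of x] by simp
    then have "c\<^sup>2 * (1 + x\<^sup>2) / (nn x)\<^sup>2 = c\<^sup>2" unfolding nn_sq[of x] by simp
    then show ?thesis using 1 by simp
  qed
  finally show ?thesis by simp
qed

lemma bb_norm: "cmod (bb x) = tt" using cmod_scaled[of tt x] tt_pos by (simp add: bb_def)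

lemma EE_sub: "EE x \<subseteq> ball 0 1"
proof
  fix z assume "z \<in> EE x"
  then have h: "cmod (z - bb x) + cmod (z + bb x) = 1 + tt\<^sup>2"
    by (simp add: EE_def ellipse_set_def)
  have "2 * z = (z - bb x) + (z + bb x)" by simp
  then have "cmod (2 * z) \<le> cmod (z - bb x) + cmod (z + bb x)"
    by (metis norm_triangle_ineq)
  then have "2 * cmod z \<le> 1 + tt\<^sup>2" using h by (simp add: norm_mult)
  moreover have "tt\<^sup>2 < 1" using tt_lt1 tt_pos by (simp add: power_less_one_iff)
  ultimately show "z \<in> ball 0 1" by simp
qed

lemma golden: "golden_ellipse (EE x)"
proof -
  have "bb x - - bb x = 2 * bb x" by simp
  then have c: "cmod (bb x - - bb x) = 2 * tt" using bb_norm[of x] by (simp add: norm_mult)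
  have "(1 - tt)\<^sup>2 > 0" using tt_lt1 by simp
  then have p: "1 + tt\<^sup>2 > 2 * tt" by (simp add: power2_eq_square algebra_simps)
  have "(1 + tt\<^sup>2)\<^sup>2 - (2*tt)\<^sup>2 = (1 - tt\<^sup>2)\<^sup>2" by (simp add: power2_eq_square algebra_simps)
  moreover have "tt\<^sup>2 < 1" using tt_lt1 tt_pos by (simp add: power_less_one_iff)
  ultimately have q: "sqrt ((1 + tt\<^sup>2)\<^sup>2 - (2*tt)\<^sup>2) = 1 - tt\<^sup>2" by simp
  have five: "sqrt 5 * sqrt 5 = (5::real)" by simp
  have m: "(1 + sqrt 5) * (3 - sqrt 5) = 2 * (sqrt 5 - (1::real))"
    using five by (simp add: algebra_simps)
  have "3 - sqrt 5 > (0::real)" using s5 by simp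
  then have g0: "(sqrt 5 - 1) / (3 - sqrt 5) = golden_ratio"
    unfolding golden_ratio_def using m by (simp add: divide_eq_eq)
  have g: "(1 + tt\<^sup>2) / (1 - tt\<^sup>2) = golden_ratio" unfolding tt2 using g0 by simp
  show ?thesis unfolding golden_ellipse_def
    apply (rule exI[of _ "bb x"], rule exI[of _ "- bb x"], rule exI[of _ "1 + tt\<^sup>2"])
    using c p q g by (simp add: EE_def)
qed

lemma blaschke: "is_blaschke_ellipse (EE x)"
proof -
  have n: "cmod (bb x) = tt" by (rule bb_norm)
  have ne: "bb x \<noteq> 0" using n tt_pos by auto
  have "cnj (bb x) * bb x = complex_of_real ((cmod (bb x))\<^sup>2)"
    by (metis complex_norm_square mult.commute of_real_power)
  then have "1 - cnj (bb x) * - bb x = complex_of_real (1 + (cmod (bb x))\<^sup>2)"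
    by simp
  then have cm: "cmod (1 - cnj (bb x) * - bb x) = 1 + tt\<^sup>2" using n
    by (simp add: add_nonneg_nonneg del: of_real_add)
  show ?thesis unfolding is_blaschke_ellipse_def blaschke_3_ellipse_def EE_def
    apply (rule exI[of _ "bb x"], rule exI[of _ "- bb x"])
    using cm n tt_lt1 ne by simp
qed

lemma EE_inj: "inj EE"
proof
  fix x y assume eq: "EE x = EE y"
  define r where "r = (1 + tt\<^sup>2) / 2"
  have "(1 - tt)\<^sup>2 > 0" using tt_lt1 by simp
  then have rt: "r > tt" unfolding r_def by (simp add: power2_eq_square algebra_simps)
  define z where "z = Complex (r / nn x) (r * x / nn x)"
  have "z - bb x = Complex ((r - tt) / nn x) ((r - tt) * x / nn x)"
    by (simp add: z_def bb_def complex_eq_iff diff_divide_distrib algebra_simps)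
  then have "cmod (z - bb x) = r - tt" using cmod_scaled rt by simp
  moreover have "z + bb x = Complex ((r + tt) / nn x) ((r + tt) * x / nn x)"
    by (simp add: z_def bb_def complex_eq_iff add_divide_distrib algebra_simps)
  then have "cmod (z + bb x) = r + tt" using cmod_scaled rt tt_pos by simp
  ultimately have "z \<in> EE x" by (simp add: EE_def ellipse_set_def r_def)
  then have "z \<in> EE y" using eq by simp
  then have h: "cmod (z - bb y) + cmod (z + bb y) = 2 * r"
    by (simp add: EE_def ellipse_set_def r_def)
  have "cmod z = \<bar>r\<bar>" unfolding z_def by (rule cmod_scaled)
  moreover have "r > 0" using rt tt_pos by linarith
  ultimately have zr: "cmod z = r" by linarith
  have "(z - bb y) + (z + bb y) = 2 * z" by simp
  then have "cmod ((z - bb y) + (z + bb y)) = cmod (2 * z)" by (rule arg_cong)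
  also have "\<dots> = 2 * r" using zr by (simp add: norm_mult)
  finally have "norm ((z - bb y) + (z + bb y)) = norm (z - bb y) + norm (z + bb y)" using h by simp
  then have e0: "cmod (z - bb y) *\<^sub>R (z + bb y) = cmod (z + bb y) *\<^sub>R (z - bb y)"
    using norm_triangle_eq by blast
  define \<alpha> where "\<alpha> = cmod (z - bb y)"
  define \<beta> where "\<beta> = cmod (z + bb y)"
  have e: "\<alpha> *\<^sub>R (z + bb y) = \<beta> *\<^sub>R (z - bb y)" using e0 unfolding \<alpha>_def \<beta>_def .
  have ab: "\<alpha> + \<beta> > 0" using h rt tt_pos unfolding \<alpha>_def \<beta>_def by linarith
  have e1: "\<alpha> * (r / nn x + tt / nn y) = \<beta> * (r / nn x - tt / nn y)"
    using arg_cong[OF e, of Re] by (simp add: z_def bb_def algebra_simps)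
  have e2: "\<alpha> * (r * x / nn x + tt * y / nn y) = \<beta> * (r * x / nn x - tt * y / nn y)"
    using arg_cong[OF e, of Im] by (simp add: z_def bb_def algebra_simps)
  have f1: "(\<alpha> - \<beta>) * r * nn y = - (\<alpha> + \<beta>) * tt * nn x"
    using e1 nn_pos[of x] nn_pos[of y] by (simp add: field_simps)
  have f2: "(\<alpha> - \<beta>) * r * x * nn y = - (\<alpha> + \<beta>) * tt * y * nn x"
    using e2 nn_pos[of x] nn_pos[of y] by (simp add: field_simps)
  have "(- (\<alpha> + \<beta>) * tt * nn x) * x = (- (\<alpha> + \<beta>) * tt * nn x) * y"
    using f1 f2 by (metis mult.assoc mult.commute)
  moreover have "- (\<alpha> + \<beta>) * tt * nn x \<noteq> 0" using ab tt_pos nn_pos[of x] by simp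
  ultimately show "x = y" by simp
qed

theorem theorem4:
  shows "infinite {E :: complex set. E \<subseteq> ball 0 1 \<and> golden_ellipse E \<and> is_blaschke_ellipse E}"
proof
  assume f: "finite {E :: complex set. E \<subseteq> ball 0 1 \<and> golden_ellipse E \<and> is_blaschke_ellipse E}"
  have "range EE \<subseteq> {E :: complex set. E \<subseteq> ball 0 1 \<and> golden_ellipse E \<and> is_blaschke_ellipse E}"
    using EE_sub golden blaschke by auto
  then have "finite (range EE)" using f finite_subset by blast
  then have "finite (UNIV :: real set)" using EE_inj finite_imageD by blast
  then show False using infinite_UNIV_char_0[where 'a=real] by blast
qed

end
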